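(* Let $Q_0,Q_1,Q_2\in\mathbb{S}^n$, $q_0,q_1,q_2\in\mathbb{R}^n$, $b_1,b_2\in\mathbb{R}$, and $A_i=\begin{pmatrix}0 & q_i^\top/2\\ q_i/2 & Q_i\end{pmatrix}$ for $i=0,1,2$. Let $\mathbf{V}_{\mathrm{opt}}=\inf\{\langle A_0,X\rangle: X\in\mathbb{S}^{n+1}_+,\ \operatorname{rank}(X)\le1,\ X_{11}=1,\ \langle A_i,X\rangle\le b_i,\ i=1,2\}$ (equal to the optimal value of $\min\{x^\top Q_0x+q_0^\top x: x^\top Q_ix+q_i^\top x\le b_i,\ i=1,2\}$) and $\mathbf{V}_{\mathrm{rel}}=\inf\{\langle A_0,X\rangle: X\in\mathbb{S}^{n+1}_+,\ X_{11}=1,\ \langle A_i,X\rangle\le b_i,\ i=1,2\}$. Suppose $\mathbf{V}_{\mathrm{rel}}$ is finite and the set of optimal solutions of the latter (relaxed) problem is bounded. If there is an optimal solution of the relaxed problem at which one of the two constraints $\langle A_i,X\rangle\le b_i$ ($i\in\{1,2\}$) is not binding, then $\mathbf{V}_{\mathrm{opt}}=\mathbf{V}_{\mathrm{rel}}$.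
   Context: $\langle A,X\rangle=\operatorname{tr}(A^\top X)$; $\mathbb{S}^n$ denotes symmetric $n\times n$ matrices and $\mathbb{S}^{n+1}_+$ positive semidefinite $(n+1)\times(n+1)$ matrices. A constraint $\langle A_i,X\rangle\le b_i$ is binding at $X$ if it holds with equality. *)

theory Defs
  imports "HOL-Analysis.Analysis" "HOL-Library.Extended_Real"
begin

definition frob :: "real^'m^'m \<Rightarrow> real^'m^'m \<Rightarrow> real" where
  "frob A X = trace (transpose A ** X)"

definition psd :: "real^'m^'m \<Rightarrow> bool" where
  "psd X \<longleftrightarrow> transpose X = X \<and> (\<forall>v. 0 \<le> v \<bullet> (X *v v))"

text \<open>The (n+1)x(n+1) matrix [[0, q^T/2],[q/2, Q]]; the extra first row/column
  is indexed by None, the others by Some j.\<close>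
definition liftA :: "real^'n^'n \<Rightarrow> real^'n \<Rightarrow> real^('n option)^('n option)" where
  "liftA Q q = (\<chi> i j. (case i of
        None \<Rightarrow> (case j of None \<Rightarrow> 0 | Some j' \<Rightarrow> q $ j' / 2)
      | Some i' \<Rightarrow> (case j of None \<Rightarrow> q $ i' / 2 | Some j' \<Rightarrow> Q $ i' $ j')))"

definition rel_feasible ::
  "real^('n::finite option)^('n option) \<Rightarrow> real^('n option)^('n option) \<Rightarrow> real \<Rightarrow> real
   \<Rightarrow> (real^('n option)^('n option)) set" where
  "rel_feasible A1 A2 b1 b2 =
     {X. psd X \<and> X $ None $ None = 1 \<and> frob A1 X \<le> b1 \<and> frob A2 X \<le> b2}"

definition opt_feasible ::
  "real^('n::finite option)^('n option) \<Rightarrow> real^('n option)^('n option) \<Rightarrow> real \<Rightarrow> real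
   \<Rightarrow> (real^('n option)^('n option)) set" where
  "opt_feasible A1 A2 b1 b2 = {X \<in> rel_feasible A1 A2 b1 b2. rank X \<le> 1}"

end

theory Submission
  imports Defs
begin


definition outer :: "real^'m \<Rightarrow> real^'m^'m" where
  "outer v = (\<chi> i j. v$i * v$j)"

lemma frob_eq: "frob A X = (\<Sum>i\<in>UNIV. \<Sum>k\<in>UNIV. A$k$i * X$k$i)"
  by (simp add: frob_def trace_def matrix_matrix_mult_def transpose_def)

lemma frob_add: "frob A (X + Y) = frob A X + frob A Y"
  by (simp add: frob_eq algebra_simps sum.distrib)

lemma frob_scale: "frob A (c *\<^sub>R X) = c * frob A X"
  by (simp add: frob_eq sum_distrib_left algebra_simps)

lemma frob_diff: "frob A (X - Y) = frob A X - frob A Y"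
  by (simp add: frob_eq algebra_simps sum_subtractf)

lemma frob_zero[simp]: "frob A 0 = 0"
  by (simp add: frob_eq)

lemma frob_sub_left: "frob (A - c *\<^sub>R B) X = frob A X - c * frob B X"
  by (simp add: frob_eq algebra_simps sum_subtractf sum_distrib_left)

lemma frob_sum_list: "frob A (sum_list (map f xs)) = sum_list (map (\<lambda>x. frob A (f x)) xs)"
  by (induction xs) (auto simp: frob_add)

lemma outer_mult: "outer v *v w = (v \<bullet> w) *\<^sub>R v"
  by (simp add: outer_def vec_eq_iff matrix_vector_mult_def inner_vec_def sum_distrib_left sum_distrib_right algebra_simps)

lemma outer_transpose: "transpose (outer v) = outer v"
  by (simp add: outer_def transpose_def vec_eq_iff mult.commute)

lemma psd_outer: "psd (outer v)"
  by (simp add: psd_def outer_transpose outer_mult inner_commute)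

lemma outer_scale: "outer (c *\<^sub>R v) = (c^2) *\<^sub>R outer v"
  by (simp add: outer_def vec_eq_iff power2_eq_square algebra_simps)

lemma outer_rot: "outer (c *\<^sub>R p + s *\<^sub>R q) + outer ((-s) *\<^sub>R p + c *\<^sub>R q) = (c^2 + s^2) *\<^sub>R (outer p + outer q)"
  by (simp add: outer_def vec_eq_iff power2_eq_square algebra_simps)

lemma psd_add: "psd X \<Longrightarrow> psd Y \<Longrightarrow> psd (X + Y)"
  by (simp add: psd_def matrix_vector_mult_add_rdistrib inner_add_right transpose_def vec_eq_iff)

lemma psd_scale: "psd X \<Longrightarrow> 0 \<le> c \<Longrightarrow> psd (c *\<^sub>R X)"
proof -
  assume a: "psd X" "0 \<le> c"
  have sm: "(c *\<^sub>R X) *v v = c *\<^sub>R (X *v v)" for v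
    by (simp add: matrix_vector_mult_def vec_eq_iff sum_distrib_left algebra_simps)
  have "transpose (c *\<^sub>R X) = c *\<^sub>R transpose X" by (simp add: transpose_def vec_eq_iff)
  then show ?thesis using a unfolding psd_def by (simp add: sm)
qed

lemma rank_outer: "rank (outer v) \<le> 1"
proof -
  have "range (\<lambda>x. outer v *v x) \<subseteq> span {v}"
    by (auto simp: outer_mult span_base span_scale)
  then have "dim (range (\<lambda>x. outer v *v x)) \<le> dim {v}"
    by (metis dim_span dim_subset)
  also have "\<dots> \<le> 1" using dim_le_card[of "{v}" "{v}"] by simp
  finally show ?thesis by (simp add: rank_dim_range)
qed



lemma psd_sym: "psd X \<Longrightarrow> u \<bullet> (X *v w) = w \<bullet> (X *v u)"
  unfolding psd_def
  by (metis dot_lmul_matrix inner_commute transpose_matrix_vector)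

lemma psd_quad: "psd X \<Longrightarrow> (u + t *\<^sub>R w) \<bullet> (X *v (u + t *\<^sub>R w)) =
   u \<bullet> (X *v u) + 2 * t * (u \<bullet> (X *v w)) + t^2 * (w \<bullet> (X *v w))"
  using psd_sym[of X w u]
  by (simp add: algebra_simps inner_add_left inner_add_right power2_eq_square)

lemma psd_cs: assumes "psd X"
  shows "(u \<bullet> (X *v w))^2 \<le> (u \<bullet> (X *v u)) * (w \<bullet> (X *v w))"
proof -
  define a where "a = w \<bullet> (X *v w)"
  define b where "b = u \<bullet> (X *v w)"
  define c where "c = u \<bullet> (X *v u)"
  have q: "0 \<le> c + 2 * t * b + t^2 * a" for t
    using psd_quad[OF assms, of u t w] assms unfolding psd_def a_def b_def c_def by metis
  have a0: "0 \<le> a" using assms unfolding psd_def a_def by blast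
  show ?thesis
  proof (cases "a = 0")
    case True
    have "b = 0"
    proof (rule ccontr)
      assume "b \<noteq> 0"
      have "0 \<le> c + 2 * (-(c+1)/(2*b)) * b" using q[of "-(c+1)/(2*b)"] True by simp
      also have "\<dots> = -1" using \<open>b \<noteq> 0\<close> by (simp add: field_simps)
      finally show False by simp
    qed
    then show ?thesis using True unfolding a_def b_def c_def by simp
  next
    case False
    then have ap: "a > 0" using a0 by simp
    have "0 \<le> c + 2 * (-b/a) * b + (-b/a)^2 * a" using q by blast
    also have "\<dots> = c - b^2 / a" using ap by (simp add: field_simps power2_eq_square)
    finally have "b^2 / a \<le> c" by simp
    then have "b^2 \<le> c * a" using ap by (simp add: field_simps)
    then show ?thesis unfolding a_def b_def c_def by (simp add: mult.commute)
  qed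
qed

lemma ax_entry: "axis j 1 \<bullet> (X *v axis k 1) = (X :: real^'m^'m) $ j $ k"
  by (simp add: matrix_vector_mult_basis column_def inner_axis')

lemma mv_axis_comp: "(X *v axis k 1) $ i = (X :: real^'m^'m) $ i $ k"
  by (simp add: matrix_vector_mult_basis column_def)

lemma psd_diag: "psd X \<Longrightarrow> 0 \<le> X $ j $ j"
  unfolding psd_def using ax_entry by metis

lemma psd_entry_sq: "psd X \<Longrightarrow> (X$i$k)^2 \<le> X$i$i * X$k$k"
  using psd_cs[of X "axis i 1" "axis k 1"] by (simp add: ax_entry)

lemma psd_decomp_aux:
  "\<forall>X::real^'m^'m. psd X \<and> card {j. X$j$j \<noteq> 0} = n \<longrightarrow> (\<exists>vs. X = sum_list (map outer vs))"
proof (induction n rule: less_induct)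
  case (less n)
  show ?case
  proof (intro allI impI)
    fix X :: "real^'m^'m"
    assume H: "psd X \<and> card {j. X$j$j \<noteq> 0} = n"
    then have ps: "psd X" by simp
    show "\<exists>vs. X = sum_list (map outer vs)"
    proof (cases "\<forall>j. X$j$j = 0")
      case True
      have "X = 0"
      proof -
        have "X$i$k = 0" for i k
        proof -
          have "(X$i$k)^2 \<le> 0" using psd_entry_sq[OF ps, of i k] True by simp
          then show ?thesis by simp
        qed
        then show ?thesis by (simp add: vec_eq_iff)
      qed
      then show ?thesis by (intro exI[of _ "[]"]) simp
    next
      case False
      then obtain j where jn: "X$j$j \<noteq> 0" by blast
      define d where "d = X$j$j"
      have dp: "d > 0" using psd_diag[OF ps, of j] jn d_def by simp
      define col where "col = X *v axis j 1"
      define v where "v = (1 / sqrt d) *\<^sub>R col"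
      define Y where "Y = X - outer v"
      have vi: "v$i = X$i$j / sqrt d" for i
        by (simp add: v_def col_def mv_axis_comp)
      have Yii: "Y$i$i = X$i$i - (X$i$j)^2 / d" for i
        using dp by (simp add: Y_def outer_def vi power2_eq_square real_sqrt_mult[symmetric])
      have psY: "psd Y"
        unfolding psd_def
      proof
        show "transpose Y = Y" using ps unfolding Y_def psd_def
          by (simp add: transpose_def vec_eq_iff outer_def mult.commute)
        show "\<forall>w. 0 \<le> w \<bullet> (Y *v w)"
        proof
          fix w
          have e: "w \<bullet> (Y *v w) = w \<bullet> (X *v w) - (v \<bullet> w)^2"
            by (simp add: Y_def matrix_vector_mult_diff_rdistrib outer_mult inner_diff_right power2_eq_square inner_commute)
          have vw: "(v \<bullet> w)^2 = (w \<bullet> (X *v axis j 1))^2 / d"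
            using dp by (simp add: v_def col_def inner_commute power_mult_distrib power_divide)
          have cs: "(w \<bullet> (X *v axis j 1))^2 \<le> (w \<bullet> (X *v w)) * d"
            using psd_cs[OF ps, of w "axis j 1"] by (simp add: ax_entry d_def)
          have "(w \<bullet> (X *v axis j 1))^2 / d \<le> w \<bullet> (X *v w)"
            using cs dp by (simp add: divide_le_eq)
          then show "0 \<le> w \<bullet> (Y *v w)" using e vw by simp
        qed
      qed
      have sub: "{i. Y$i$i \<noteq> 0} \<subseteq> {i. X$i$i \<noteq> 0} - {j}"
      proof
        fix i assume "i \<in> {i. Y$i$i \<noteq> 0}"
        then have yi: "Y$i$i \<noteq> 0" by simp
        have "Y$j$j = 0" using Yii[of j] dp d_def by (simp add: power2_eq_square)
        then have "i \<noteq> j" using yi by blast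
        moreover have "X$i$i \<noteq> 0"
        proof
          assume x0: "X$i$i = 0"
          have "(X$i$j)^2 \<le> 0" using psd_entry_sq[OF ps, of i j] x0 by simp
          then have "X$i$j = 0" by simp
          then show False using yi Yii[of i] x0 by simp
        qed
        ultimately show "i \<in> {i. X$i$i \<noteq> 0} - {j}" by simp
      qed
      have "card {i. Y$i$i \<noteq> 0} < n"
      proof -
        have "card {i. Y$i$i \<noteq> 0} \<le> card ({i. X$i$i \<noteq> 0} - {j})"
          by (rule card_mono[OF _ sub]) simp
        also have "\<dots> < card {i. X$i$i \<noteq> 0}"
          using jn by (intro psubset_card_mono) auto
        finally show ?thesis using H by simp
      qed
      then obtain vs where "Y = sum_list (map outer vs)" using less psY by blast
      then have "X = sum_list (map outer (v # vs))" by (simp add: Y_def algebra_simps)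
      then show ?thesis by blast
    qed
  qed
qed

lemma psd_decomp: "psd X \<Longrightarrow> \<exists>vs. X = sum_list (map outer vs)"
  using psd_decomp_aux by blast



lemma frob_outer: "frob G (outer v) = (\<Sum>i\<in>UNIV. \<Sum>k\<in>UNIV. G$k$i * (v$k * v$i))"
  by (simp add: frob_eq outer_def)

lemma rot0:
  fixes G :: "real^'m^'m"
  assumes "frob G (outer p) \<ge> 0" "frob G (outer q) \<le> 0"
  shows "\<exists>a b. outer a + outer b = outer p + outer q \<and> frob G (outer a) = 0"
proof -
  define h where "h = (\<lambda>t. frob G (outer (cos t *\<^sub>R p + sin t *\<^sub>R q)))"
  have hf: "h = (\<lambda>t. \<Sum>i\<in>UNIV. \<Sum>k\<in>UNIV. G$k$i * ((cos t * p$k + sin t * q$k) * (cos t * p$i + sin t * q$i)))"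
    by (simp add: h_def frob_outer)
  have c: "continuous_on {0..pi/2} h"
    unfolding hf by (intro continuous_intros)
  have "h (pi/2) \<le> 0" "0 \<le> h 0" using assms by (simp_all add: h_def)
  moreover have "(0::real) \<le> pi/2" by simp
  ultimately obtain t where t: "h t = 0" using IVT2'[OF _ _ _ c] by blast
  show ?thesis
    apply (rule exI[of _ "cos t *\<^sub>R p + sin t *\<^sub>R q"])
    apply (rule exI[of _ "(- sin t) *\<^sub>R p + cos t *\<^sub>R q"])
    using t outer_rot[of "cos t" p "sin t" q] by (simp add: h_def add.commute)
qed

lemma filter_remove1:
  "x \<in> set xs \<Longrightarrow> length (filter P xs) = (if P x then 1 else 0) + length (filter P (remove1 x xs))"
  by (induction xs) auto

lemma sz_aux:
  fixes G :: "real^'m^'m"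
  shows "\<forall>vs. length (filter (\<lambda>v. frob G (outer v) \<noteq> 0) vs) = m \<and> sum_list (map (\<lambda>v. frob G (outer v)) vs) \<le> 0
    \<longrightarrow> (\<exists>ws. sum_list (map outer ws) = sum_list (map outer vs) \<and> (\<forall>w\<in>set ws. frob G (outer w) \<le> 0))"
proof (induction m rule: less_induct)
  case (less m)
  show ?case
  proof (intro allI impI)
    fix vs :: "(real^'m) list"
    let ?g = "\<lambda>v. frob G (outer v)"
    let ?nz = "\<lambda>v. frob G (outer v) \<noteq> 0"
    assume H: "length (filter ?nz vs) = m \<and> sum_list (map ?g vs) \<le> 0"
    show "\<exists>ws. sum_list (map outer ws) = sum_list (map outer vs) \<and> (\<forall>w\<in>set ws. ?g w \<le> 0)"
    proof (cases "\<forall>v\<in>set vs. ?g v \<le> 0")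
      case True then show ?thesis by blast
    next
      case False
      then obtain p where p: "p \<in> set vs" "?g p > 0" by force
      define r1 where "r1 = remove1 p vs"
      have s1: "sum_list (map ?g vs) = ?g p + sum_list (map ?g r1)"
        using p(1) unfolding r1_def by (rule sum_list_map_remove1)
      have "\<exists>q\<in>set r1. ?g q < 0"
      proof (rule ccontr)
        assume "\<not> ?thesis"
        then have "0 \<le> sum_list (map ?g r1)" by (intro sum_list_nonneg) force
        then show False using s1 p H by simp
      qed
      then obtain q where q: "q \<in> set r1" "?g q < 0" by blast
      define r where "r = remove1 q r1"
      have s2: "sum_list (map ?g r1) = ?g q + sum_list (map ?g r)"
        using q(1) unfolding r_def by (rule sum_list_map_remove1)
      have o1: "sum_list (map outer vs) = outer p + sum_list (map outer r1)"
        using p(1) unfolding r1_def by (rule sum_list_map_remove1)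
      have o2: "sum_list (map outer r1) = outer q + sum_list (map outer r)"
        using q(1) unfolding r_def by (rule sum_list_map_remove1)
      have l1: "length (filter ?nz vs) = 1 + length (filter ?nz r1)"
        using filter_remove1[OF p(1), of ?nz] p(2) unfolding r1_def by simp
      have l2: "length (filter ?nz r1) = 1 + length (filter ?nz r)"
        using filter_remove1[OF q(1), of ?nz] q(2) unfolding r_def by simp
      obtain a b where ab: "outer a + outer b = outer p + outer q" "?g a = 0"
        using rot0[of G p q] p q by force
      have gb: "?g a + ?g b = ?g p + ?g q"
        using arg_cong[OF ab(1), of "frob G"] by (simp add: frob_add)
      define new where "new = a # b # r"
      have "length (filter ?nz new) < m"
        using l1 l2 H ab(2) unfolding new_def by auto
      moreover have "sum_list (map ?g new) \<le> 0"
        using s1 s2 gb ab(2) H unfolding new_def by simp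
      ultimately obtain ws where ws: "sum_list (map outer ws) = sum_list (map outer new)"
        "\<forall>w\<in>set ws. ?g w \<le> 0" using less by blast
      have "sum_list (map outer new) = sum_list (map outer vs)"
        using o1 o2 ab(1) unfolding new_def by (simp add: algebra_simps)
      then show ?thesis using ws by metis
    qed
  qed
qed

lemma sz:
  fixes G :: "real^'m^'m"
  assumes "sum_list (map (\<lambda>v. frob G (outer v)) vs) \<le> 0"
  shows "\<exists>ws. sum_list (map outer ws) = sum_list (map outer vs) \<and> (\<forall>w\<in>set ws. frob G (outer w) \<le> 0)"
  using sz_aux assms by blast



definition E11 :: "real^('n::finite option)^('n option)" where
  "E11 = (\<chi> i j. if i = None \<and> j = None then 1 else 0)"

lemma frob_E11: "frob E11 X = X $ None $ None"
proof -
  have "(\<Sum>k\<in>UNIV. E11$k$i * X$k$i) = (if i = None then X$None$None else 0)" for i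
  proof -
    have m: "\<And>P (x::real). (if P then 1 else 0) * x = (if P then x else 0)" by simp
    show ?thesis by (cases i) (simp_all add: E11_def m)
  qed
  then show ?thesis by (simp add: frob_eq)
qed

lemma outer_NN: "outer w $ None $ None = (w $ None)^2"
  by (simp add: outer_def power2_eq_square)

lemma sum_list_outer_NN: "sum_list (map outer ws) $ i $ j = sum_list (map (\<lambda>w. outer w $ i $ j) ws)"
  by (induction ws) auto

lemma P2opt:
  fixes A0 A1 A2 :: "real^('n::finite option)^('n option)"
  assumes X0: "X0 \<in> rel_feasible A1 A2 b1 b2" "frob A0 X0 = V"
  and low: "\<forall>X\<in>rel_feasible A1 A2 b1 b2. V \<le> frob A0 X"
  and sl: "frob A1 X0 < b1"
  and Y: "psd Y" "Y $ None $ None = 1" "frob A2 Y \<le> b2"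
  shows "V \<le> frob A0 Y"
proof (rule ccontr)
  assume neg: "\<not> V \<le> frob A0 Y"
  define a where "a = frob A1 X0"
  define c where "c = frob A1 Y"
  define t where "t = (b1 - a) / (\<bar>c - a\<bar> + (b1 - a))"
  have ba: "b1 - a > 0" using sl a_def by simp
  have t0: "0 < t" "t \<le> 1" using ba by (auto simp: t_def field_simps)
  have tc: "t * (c - a) \<le> b1 - a"
  proof -
    have "t * (c - a) \<le> t * \<bar>c - a\<bar>" using t0 by (intro mult_left_mono) auto
    also have "\<dots> = (b1 - a) * (\<bar>c - a\<bar> / (\<bar>c - a\<bar> + (b1 - a)))" by (simp add: t_def)
    also have "\<dots> \<le> (b1 - a) * 1" using ba by (intro mult_left_mono) (auto simp: field_simps)
    finally show ?thesis by simp
  qed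
  define Z where "Z = (1 - t) *\<^sub>R X0 + t *\<^sub>R Y"
  have X0f: "psd X0" "X0 $ None $ None = 1" "frob A1 X0 \<le> b1" "frob A2 X0 \<le> b2"
    using X0(1) by (auto simp: rel_feasible_def)
  have "psd Z" unfolding Z_def using t0 X0f Y by (intro psd_add psd_scale) auto
  moreover have "Z $ None $ None = 1" using X0f Y by (simp add: Z_def algebra_simps)
  moreover have "frob A1 Z \<le> b1"
    proof -
    have "frob A1 Z = (1 - t) * a + t * c" unfolding Z_def a_def c_def by (simp only: frob_add frob_scale)
    then show ?thesis using tc by (simp add: algebra_simps)
  qed
  moreover have "frob A2 Z \<le> b2"
  proof -
    have "frob A2 Z = (1 - t) * frob A2 X0 + t * frob A2 Y" by (simp add: Z_def frob_add frob_scale)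
    also have "\<dots> \<le> (1 - t) * b2 + t * b2"
      using t0 X0f Y by (intro add_mono mult_left_mono) auto
    finally show ?thesis by (simp add: algebra_simps)
  qed
  ultimately have "Z \<in> rel_feasible A1 A2 b1 b2" by (simp add: rel_feasible_def)
  then have "V \<le> frob A0 Z" using low by blast
  also have "frob A0 Z = (1 - t) * V + t * frob A0 Y" using X0 by (simp add: Z_def frob_add frob_scale)
  also have "\<dots> < (1 - t) * V + t * V" using neg t0 by simp
  finally show False by (simp add: algebra_simps)
qed



lemma sum_list_lin: "sum_list (map (\<lambda>x. f x - c * g x) xs) = sum_list (map f xs) - (c::real) * sum_list (map g xs)"
  by (induction xs) (auto simp: algebra_simps)

lemma rel_feasible_swap: "rel_feasible A2 A1 b2 b1 = rel_feasible A1 A2 b1 b2"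
  by (auto simp: rel_feasible_def)

lemma main_one:
  fixes A0 A1 A2 :: "real^('n::finite option)^('n option)"
  assumes X0: "X0 \<in> rel_feasible A1 A2 b1 b2" "frob A0 X0 = V"
  and low: "\<forall>X\<in>rel_feasible A1 A2 b1 b2. V \<le> frob A0 X"
  and bd: "bounded {X \<in> rel_feasible A1 A2 b1 b2. frob A0 X = V}"
  and sl: "frob A1 X0 < b1"
  shows "\<exists>z. outer z \<in> rel_feasible A1 A2 b1 b2 \<and> frob A0 (outer z) = V"
proof -
  have X0f: "psd X0" "X0 $ None $ None = 1" "frob A1 X0 \<le> b1" "frob A2 X0 \<le> b2"
    using X0(1) by (auto simp: rel_feasible_def)
  note P2 = P2opt[OF X0 low sl]
  define G where "G = A2 - b2 *\<^sub>R E11"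
  obtain vs where vs: "X0 = sum_list (map outer vs)" using psd_decomp[OF X0f(1)] by blast
  have "frob G X0 \<le> 0" using X0f by (simp add: G_def frob_sub_left frob_E11)
  then have "sum_list (map (\<lambda>v. frob G (outer v)) vs) \<le> 0" using vs by (simp add: frob_sum_list)
  from sz[OF this] vs obtain ws where ws: "X0 = sum_list (map outer ws)"
    and wsG: "\<forall>w\<in>set ws. frob G (outer w) \<le> 0" by metis
  have wA2: "frob A2 (outer w) \<le> b2 * (w$None)^2" if "w \<in> set ws" for w
    using wsG that by (simp add: G_def frob_sub_left frob_E11 outer_NN)
  have scl: "outer ((1 / w$None) *\<^sub>R w) = (1 / (w$None)^2) *\<^sub>R outer w" for w :: "real^('n option)"
    by (simp add: outer_scale power_divide)
  have sclNN: "outer ((1 / w$None) *\<^sub>R w) $ None $ None = 1" if "w$None \<noteq> 0" for w :: "real^('n option)"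
    using that by (simp add: outer_NN power_divide)
  have loww: "V * (w$None)^2 \<le> frob A0 (outer w)" if w: "w \<in> set ws" for w
  proof (cases "w$None = 0")
    case True
    define Y where "Y = X0 + outer w"
    have "psd Y" unfolding Y_def using X0f psd_outer by (intro psd_add) auto
    moreover have "Y $ None $ None = 1" using X0f True by (simp add: Y_def outer_NN)
    moreover have "frob A2 Y \<le> b2" using X0f wA2[OF w] True by (simp add: Y_def frob_add)
    ultimately have "V \<le> frob A0 Y" using P2 by blast
    then show ?thesis using X0 True by (simp add: Y_def frob_add)
  next
    case False
    define Y where "Y = outer ((1 / w$None) *\<^sub>R w)"
    have wp: "(w$None)^2 > 0" using False by simp
    have "psd Y" unfolding Y_def by (rule psd_outer)
    moreover have "Y $ None $ None = 1" using sclNN[OF False] by (simp add: Y_def)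
    moreover have "frob A2 Y \<le> b2" using wA2[OF w] wp
      by (simp add: Y_def scl frob_scale divide_le_eq mult.commute)
    ultimately have "V \<le> frob A0 Y" using P2 by blast
    then show ?thesis using wp by (simp add: Y_def scl frob_scale le_divide_eq mult.commute)
  qed
  have s1: "sum_list (map (\<lambda>w. (w$None)^2) ws) = 1"
    using X0f(2) ws by (simp add: sum_list_outer_NN outer_NN)
  have sA0: "sum_list (map (\<lambda>w. frob A0 (outer w)) ws) = V" using X0 ws by (simp add: frob_sum_list)
  have sA1: "sum_list (map (\<lambda>w. frob A1 (outer w)) ws) = frob A1 X0" using ws by (simp add: frob_sum_list)
  have "sum_list (map (\<lambda>w. frob A0 (outer w) - V * (w$None)^2) ws) = 0"
    using sum_list_lin[of "\<lambda>w. frob A0 (outer w)" V "\<lambda>w. (w$None)^2" ws] s1 sA0 by simp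
  then have eqw: "\<forall>w\<in>set ws. frob A0 (outer w) - V * (w$None)^2 = 0"
    using sum_list_nonneg_eq_0_iff[of "map (\<lambda>w. frob A0 (outer w) - V * (w$None)^2) ws"] loww by force
  have "sum_list (map (\<lambda>w. frob A1 (outer w) - b1 * (w$None)^2) ws) < 0"
    using sum_list_lin[of "\<lambda>w. frob A1 (outer w)" b1 "\<lambda>w. (w$None)^2" ws] s1 sA1 sl by simp
  then have "\<exists>w\<in>set ws. frob A1 (outer w) - b1 * (w$None)^2 < 0"
  proof (rule contrapos_pp)
    assume "\<not> (\<exists>w\<in>set ws. frob A1 (outer w) - b1 * (w$None)^2 < 0)"
    then have "\<forall>x\<in>set (map (\<lambda>w. frob A1 (outer w) - b1 * (w$None)^2) ws). 0 \<le> x" by auto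
    then have "0 \<le> sum_list (map (\<lambda>w. frob A1 (outer w) - b1 * (w$None)^2) ws)"
      by (intro sum_list_nonneg) blast
    then show "\<not> sum_list (map (\<lambda>w. frob A1 (outer w) - b1 * (w$None)^2) ws) < 0" by simp
  qed
  then obtain w where w: "w \<in> set ws" "frob A1 (outer w) - b1 * (w$None)^2 < 0" by blast
  show ?thesis
  proof (cases "w$None = 0")
    case False
    define z where "z = (1 / w$None) *\<^sub>R w"
    have wp: "(w$None)^2 > 0" using False by simp
    have "outer z \<in> rel_feasible A1 A2 b1 b2"
      unfolding rel_feasible_def
    proof (intro CollectI conjI)
      show "psd (outer z)" by (rule psd_outer)
      show "outer z $ None $ None = 1" using sclNN[OF False] by (simp add: z_def)
      show "frob A1 (outer z) \<le> b1" using w(2) wp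
        by (simp add: z_def scl frob_scale divide_le_eq mult.commute)
      show "frob A2 (outer z) \<le> b2" using wA2[OF w(1)] wp
        by (simp add: z_def scl frob_scale divide_le_eq mult.commute)
    qed
    moreover have "frob A0 (outer z) = V" using eqw w(1) wp
      by (simp add: z_def scl frob_scale)
    ultimately show ?thesis by blast
  next
    case True
    define D where "D = outer w"
    have D1: "frob A1 D < 0" using w True by (simp add: D_def)
    have D2: "frob A2 D \<le> 0" using wA2[OF w(1)] True by (simp add: D_def)
    have D0: "frob A0 D = 0" using eqw w(1) True by (simp add: D_def)
    have Dnz: "D \<noteq> 0" using D1 by auto
    have inS: "X0 + t *\<^sub>R D \<in> {X \<in> rel_feasible A1 A2 b1 b2. frob A0 X = V}" if t: "t \<ge> 0" for t
    proof -
      have "psd (X0 + t *\<^sub>R D)" using X0f t unfolding D_def by (intro psd_add psd_scale psd_outer) auto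
      moreover have "(X0 + t *\<^sub>R D) $ None $ None = 1" using X0f True by (simp add: D_def outer_NN)
      moreover have "frob A1 (X0 + t *\<^sub>R D) \<le> b1" using X0f D1 t
        by (simp add: frob_add frob_scale) (smt (verit) mult_nonneg_nonpos)
      moreover have "frob A2 (X0 + t *\<^sub>R D) \<le> b2" using X0f D2 t
        by (simp add: frob_add frob_scale) (smt (verit) mult_nonneg_nonpos)
      moreover have "frob A0 (X0 + t *\<^sub>R D) = V" using X0 D0 by (simp add: frob_add frob_scale)
      ultimately show ?thesis by (simp add: rel_feasible_def)
    qed
    obtain M where M: "\<forall>x\<in>{X \<in> rel_feasible A1 A2 b1 b2. frob A0 X = V}. norm x \<le> M"
      using bd bounded_iff by blast
    define t where "t = (\<bar>M\<bar> + norm X0 + 1) / norm D"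
    have nD: "norm D > 0" using Dnz by simp
    have t0: "t \<ge> 0" using nD by (simp add: t_def)
    have "norm (t *\<^sub>R D) \<le> norm (X0 + t *\<^sub>R D) + norm X0"
      using norm_triangle_ineq4[of "X0 + t *\<^sub>R D" X0] by simp
    moreover have "norm (t *\<^sub>R D) = \<bar>M\<bar> + norm X0 + 1" using nD t0 by (simp add: t_def)
    moreover have "norm (X0 + t *\<^sub>R D) \<le> M" using M inS[OF t0] by blast
    ultimately show ?thesis by simp
  qed
qed


theorem corollary9:
  fixes Q0 Q1 Q2 :: "real^'n::finite^'n" and q0 q1 q2 :: "real^'n" and b1 b2 :: real
  assumes "transpose Q0 = Q0" "transpose Q1 = Q1" "transpose Q2 = Q2"
  defines "A0 \<equiv> liftA Q0 q0" and "A1 \<equiv> liftA Q1 q1" and "A2 \<equiv> liftA Q2 q2"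
  defines "Vopt \<equiv> (INF X\<in>opt_feasible A1 A2 b1 b2. ereal (frob A0 X))"
      and "Vrel \<equiv> (INF X\<in>rel_feasible A1 A2 b1 b2. ereal (frob A0 X))"
  assumes "\<bar>Vrel\<bar> \<noteq> \<infinity>"
      and "bounded {X \<in> rel_feasible A1 A2 b1 b2. ereal (frob A0 X) = Vrel}"
      and "\<exists>X \<in> rel_feasible A1 A2 b1 b2. ereal (frob A0 X) = Vrel \<and>
             (frob A1 X < b1 \<or> frob A2 X < b2)"
  shows "Vopt = Vrel"
proof -
  obtain V where V: "Vrel = ereal V" using \<open>\<bar>Vrel\<bar> \<noteq> \<infinity>\<close> by (cases Vrel) auto
  obtain X0 where X0: "X0 \<in> rel_feasible A1 A2 b1 b2" "frob A0 X0 = V"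
    and sl: "frob A1 X0 < b1 \<or> frob A2 X0 < b2" using \<open>\<exists>X \<in> rel_feasible A1 A2 b1 b2. ereal (frob A0 X) = Vrel \<and> (frob A1 X < b1 \<or> frob A2 X < b2)\<close> V by auto
  have low: "\<forall>X\<in>rel_feasible A1 A2 b1 b2. V \<le> frob A0 X"
  proof
    fix X assume "X \<in> rel_feasible A1 A2 b1 b2"
    then have "Vrel \<le> ereal (frob A0 X)" unfolding Vrel_def by (rule INF_lower)
    then show "V \<le> frob A0 X" using V by simp
  qed
  have bd: "bounded {X \<in> rel_feasible A1 A2 b1 b2. frob A0 X = V}" using \<open>bounded {X \<in> rel_feasible A1 A2 b1 b2. ereal (frob A0 X) = Vrel}\<close> V by simp
  have "\<exists>z. outer z \<in> rel_feasible A1 A2 b1 b2 \<and> frob A0 (outer z) = V"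
  proof (cases "frob A1 X0 < b1")
    case True
    then show ?thesis using main_one[OF X0 low bd] by blast
  next
    case False
    then have s2: "frob A2 X0 < b2" using sl by blast
    show ?thesis using main_one[of X0 A2 A1 b2 b1 A0 V] X0 low bd s2
      by (simp add: rel_feasible_swap)
  qed
  then obtain z where z: "outer z \<in> rel_feasible A1 A2 b1 b2" "frob A0 (outer z) = V" by blast
  have "outer z \<in> opt_feasible A1 A2 b1 b2" using z rank_outer by (simp add: opt_feasible_def)
  then have "Vopt \<le> ereal (frob A0 (outer z))" unfolding Vopt_def by (rule INF_lower)
  then have "Vopt \<le> Vrel" using z V by simp
  moreover have "Vrel \<le> Vopt" unfolding Vrel_def Vopt_def
    by (rule INF_superset_mono) (auto simp: opt_feasible_def)
  ultimately show ?thesis by simp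
qed

end
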